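(* Let $S$ be a self-adjoint subspace in $X^2$, and let $A$ and $S+A$ be closed Hermitian subspaces in $X^2$, with $D(S)\subset D(A)$. Let $Q:A(0)^\perp\to S(0)^\perp$ be the orthogonal projection (under these hypotheses $A(0)\subset S(0)$, so $S(0)^\perp\subset A(0)^\perp$). If $QA_s$ is $S_s$-bounded with $S_s$-bound less than $1$, then $S+A$ is a self-adjoint subspace in $X^2$.
   Context: $X$ is a complex Hilbert space and $X^2=X\times X$ carries the inner product $\langle (x,f),(y,g)\rangle=\langle x,y\rangle+\langle f,g\rangle$. A subspace $T$ in $X^2$ means a linear subspace of $X^2$ (a linear relation); a linear operator in $X$ is identified with its graph. Notation: $D(T)=\{x:(x,f)\in T \text{ for some } f\}$, $T(x)=\{f:(x,f)\in T\}$. The adjoint is $T^*=\{(y,g)\in X^2:\langle g,x\rangle=\langle y,f\rangle \text{ for all }(x,f)\in T\}$; $T$ is Hermitian if $T\subset T^*$ and self-adjoint if $T=T^*$. For subspaces $S,A$ in $X^2$, $S+A=\{(x,f+g):(x,f)\in S,(x,g)\in A\}$. For a closed subspace $T$, set $T_\infty=\{(0,g)\in X^2:(0,g)\in T\}$ and $T_s=T\ominus T_\infty$ (orthogonal complement of $T_\infty$ in $T$), so $T=T_s\oplus T_\infty$; $T_s$ is the graph of a linear operator (the operator part of $T$) with $D(T_s)=D(T)$ and $R(T_s)\subset T(0)^\perp$. For linear operators $U,V$ in $X$: $U$ is $V$-bounded if $D(V)\subset D(U)$ and there is $c\ge0$ with $\|Ux\|\le c(\|x\|+\|Vx\|)$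 for $x\in D(V)$; the $V$-bound of $U$ is the infimum of all $a\ge 0$ for which some $b\ge0$ satisfies $\|Ux\|\le a\|Vx\|+b\|x\|$ for all $x\in D(V)$. *)

theory Defs
  imports "HOL-Analysis.Analysis"
begin

text \<open>A complex Hilbert space: a real inner product space that is complete, equipped with
  a complex scalar multiplication and a complex inner product (linear in the first argument,
  conjugate symmetric) whose real part is the underlying real inner product.  Hence the norm
  is the one induced by the complex inner product.\<close>

class chilbert = real_inner + complete_space +
  fixes scaleC :: "complex \<Rightarrow> 'a \<Rightarrow> 'a" (infixr \<open>*\<^sub>C\<close> 75)
    and cinner :: "'a \<Rightarrow> 'a \<Rightarrow> complex"
  assumes scaleC_add_right: "c *\<^sub>C (x + y) = c *\<^sub>C x + c *\<^sub>C y"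
    and scaleC_add_left: "(b + c) *\<^sub>C x = b *\<^sub>C x + c *\<^sub>C x"
    and scaleC_scaleC: "b *\<^sub>C (c *\<^sub>C x) = (b * c) *\<^sub>C x"
    and scaleC_one: "1 *\<^sub>C x = x"
    and scaleC_of_real: "complex_of_real r *\<^sub>C x = r *\<^sub>R x"
    and cinner_add_left: "cinner (x + y) z = cinner x z + cinner y z"
    and cinner_scaleC_left: "cinner (c *\<^sub>C x) y = c * cinner x y"
    and cinner_commute: "cinner y x = cnj (cinner x y)"
    and Re_cinner: "Re (cinner x y) = inner x y"

definition lin_rel :: "('a::chilbert \<times> 'a) set \<Rightarrow> bool" where
  "lin_rel T \<longleftrightarrow> (0, 0) \<in> T
     \<and> (\<forall>x f y g. (x, f) \<in> T \<and> (y, g) \<in> T \<longrightarrow> (x + y, f + g) \<in> T)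
     \<and> (\<forall>c x f. (x, f) \<in> T \<longrightarrow> (c *\<^sub>C x, c *\<^sub>C f) \<in> T)"

definition rdom :: "('a \<times> 'a) set \<Rightarrow> 'a set" where
  "rdom T = {x. \<exists>f. (x, f) \<in> T}"

definition rimg :: "('a \<times> 'a) set \<Rightarrow> 'a \<Rightarrow> 'a set" where
  "rimg T x = {f. (x, f) \<in> T}"

definition radj :: "('a::chilbert \<times> 'a) set \<Rightarrow> ('a \<times> 'a) set" where
  "radj T = {(y, g). \<forall>x f. (x, f) \<in> T \<longrightarrow> cinner g x = cinner y f}"

definition hermitian_rel :: "('a::chilbert \<times> 'a) set \<Rightarrow> bool" where
  "hermitian_rel T \<longleftrightarrow> T \<subseteq> radj T"

definition selfadjoint_rel :: "('a::chilbert \<times> 'a) set \<Rightarrow> bool" where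
  "selfadjoint_rel T \<longleftrightarrow> T = radj T"

definition rsum :: "('a::chilbert \<times> 'a) set \<Rightarrow> ('a \<times> 'a) set \<Rightarrow> ('a \<times> 'a) set" where
  "rsum S A = {(x, f + g) | x f g. (x, f) \<in> S \<and> (x, g) \<in> A}"

definition corth :: "'a::chilbert set \<Rightarrow> 'a set" where
  "corth M = {y. \<forall>x\<in>M. cinner x y = 0}"

text \<open>T_infinity = {(0,g) in T}; T_s = T minus T_infinity (orthogonal complement in X^2,
  with the inner product <(x,f),(y,g)> = <x,y> + <f,g>), written out.\<close>
definition rinf :: "('a::chilbert \<times> 'a) set \<Rightarrow> ('a \<times> 'a) set" where
  "rinf T = {(0, g) | g. (0, g) \<in> T}"

definition rsing :: "('a::chilbert \<times> 'a) set \<Rightarrow> ('a \<times> 'a) set" where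
  "rsing T = {(x, f) \<in> T. \<forall>y g. (y, g) \<in> rinf T \<longrightarrow> cinner x y + cinner f g = 0}"

text \<open>The operator part T_s as a function on D(T) (its graph is rsing T).\<close>
definition opart :: "('a::chilbert \<times> 'a) set \<Rightarrow> 'a \<Rightarrow> 'a" where
  "opart T x = (THE f. (x, f) \<in> rsing T)"

definition cproj :: "'a::chilbert set \<Rightarrow> 'a \<Rightarrow> 'a" where
  "cproj M x = (THE y. y \<in> M \<and> (\<forall>z\<in>M. cinner (x - y) z = 0))"

definition rel_bounded :: "('a::chilbert \<Rightarrow> 'a) \<Rightarrow> 'a set \<Rightarrow> ('a \<Rightarrow> 'a) \<Rightarrow> 'a set \<Rightarrow> bool" where
  "rel_bounded U DU V DV \<longleftrightarrow> DV \<subseteq> DU \<and>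
     (\<exists>c\<ge>0. \<forall>x\<in>DV. norm (U x) \<le> c * (norm x + norm (V x)))"

definition rel_bound :: "('a::chilbert \<Rightarrow> 'a) \<Rightarrow> ('a \<Rightarrow> 'a) \<Rightarrow> 'a set \<Rightarrow> real" where
  "rel_bound U V DV = Inf {a. a \<ge> 0 \<and>
     (\<exists>b\<ge>0. \<forall>x\<in>DV. norm (U x) \<le> a * norm (V x) + b * norm x)}"

end

theory Submission
  imports Defs
begin


lemma scaleC_zero_left[simp]: "(0::complex) *\<^sub>C (x::'a::chilbert) = 0"
  using scaleC_of_real[of 0 x] by simp

lemma scaleC_zero_right[simp]: "c *\<^sub>C (0::'a::chilbert) = 0"
  using scaleC_add_right[of c "0::'a" 0] by simp

lemma scaleC_minus_left: "(- c) *\<^sub>C (x::'a::chilbert) = - (c *\<^sub>C x)"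
  using scaleC_add_left[of c "-c" x] by (simp add: eq_neg_iff_add_eq_0 add.commute)

lemma scaleC_minus_right: "c *\<^sub>C (- x::'a::chilbert) = - (c *\<^sub>C x)"
  using scaleC_add_right[of c x "-x"] by (simp add: eq_neg_iff_add_eq_0 add.commute)

lemma scaleC_diff_right: "c *\<^sub>C (x - y::'a::chilbert) = c *\<^sub>C x - c *\<^sub>C y"
  using scaleC_add_right[of c x "-y"] scaleC_minus_right by (metis diff_conv_add_uminus)

lemma scaleC_diff_left: "(b - c) *\<^sub>C (x::'a::chilbert) = b *\<^sub>C x - c *\<^sub>C x"
  using scaleC_add_left[of b "-c" x] scaleC_minus_left by (metis diff_conv_add_uminus)

lemma scaleC_scaleR: "c *\<^sub>C (r *\<^sub>R (x::'a::chilbert)) = r *\<^sub>R (c *\<^sub>C x)"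
  by (metis scaleC_of_real scaleC_scaleC mult.commute)

lemma cinner_zero_left[simp]: "cinner (0::'a::chilbert) y = 0"
  using cinner_scaleC_left[of 0 "0::'a" y] by simp

lemma cinner_zero_right[simp]: "cinner (y::'a::chilbert) 0 = 0"
  using cinner_commute[of y 0] by simp

lemma cinner_minus_left: "cinner (- x::'a::chilbert) y = - cinner x y"
  using cinner_add_left[of x "-x" y] by (simp add: eq_neg_iff_add_eq_0 add.commute)

lemma cinner_diff_left: "cinner (x - y::'a::chilbert) z = cinner x z - cinner y z"
  by (metis cinner_add_left cinner_minus_left diff_conv_add_uminus)

lemma cinner_add_right: "cinner (z::'a::chilbert) (x + y) = cinner z x + cinner z y"
  by (metis cinner_add_left cinner_commute complex_cnj_add)

lemma cinner_diff_right: "cinner (z::'a::chilbert) (x - y) = cinner z x - cinner z y"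
  by (metis cinner_diff_left cinner_commute complex_cnj_diff)

lemma cinner_minus_right: "cinner (z::'a::chilbert) (- x) = - cinner z x"
  by (metis cinner_minus_left cinner_commute complex_cnj_minus)

lemma cinner_scaleC_right: "cinner (x::'a::chilbert) (c *\<^sub>C y) = cnj c * cinner x y"
  by (metis cinner_scaleC_left cinner_commute complex_cnj_mult)

lemma cinner_self: "cinner (x::'a::chilbert) x = complex_of_real ((norm x)\<^sup>2)"
proof -
  have "Im (cinner x x) = 0" using cinner_commute[of x x] by (metis cnj.simps(2) equation_minus_iff zero_neq_numeral complex_cnj_cancel_iff Im_complex_of_real Reals_cnj_iff complex_is_Real_iff)
  moreover have "Re (cinner x x) = (norm x)\<^sup>2" by (simp add: Re_cinner power2_norm_eq_inner)
  ultimately show ?thesis by (simp add: complex_eq_iff)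
qed

lemma cinner_self_eq_0: "cinner (x::'a::chilbert) x = 0 \<longleftrightarrow> x = 0"
  by (simp add: cinner_self)

lemma norm_add_sq: "(norm (x + y::'a::chilbert))\<^sup>2 = (norm x)\<^sup>2 + (norm y)\<^sup>2 + 2 * Re (cinner x y)"
  by (simp add: Re_cinner power2_norm_eq_inner inner_add inner_commute)

lemma norm_diff_sq: "(norm (x - y::'a::chilbert))\<^sup>2 = (norm x)\<^sup>2 + (norm y)\<^sup>2 - 2 * Re (cinner x y)"
  by (simp add: Re_cinner power2_norm_eq_inner inner_diff inner_commute)

lemma norm_scaleC: "norm (c *\<^sub>C (x::'a::chilbert)) = cmod c * norm x"
proof -
  have "complex_of_real ((norm (c *\<^sub>C x))\<^sup>2) = c * cnj c * complex_of_real ((norm x)\<^sup>2)"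
  proof -
    have "cinner (c *\<^sub>C x) (c *\<^sub>C x) = c * cnj c * cinner x x"
      by (simp add: cinner_scaleC_left cinner_scaleC_right)
    then show ?thesis by (simp only: cinner_self)
  qed
  also have "c * cnj c = complex_of_real ((cmod c)\<^sup>2)" using complex_norm_square[of c] by simp
  finally have "(norm (c *\<^sub>C x))\<^sup>2 = (cmod c * norm x)\<^sup>2"
    by (metis of_real_eq_iff of_real_mult power_mult_distrib)
  then show ?thesis by (simp add: power2_eq_iff_nonneg)
qed

lemma bounded_linear_scaleC: "bounded_linear (\<lambda>x::'a::chilbert. c *\<^sub>C x)"
  apply (rule bounded_linear_intro[where K="cmod c"])
  by (auto simp: scaleC_add_right scaleC_scaleR norm_scaleC)

lemma cinner_as_inner: "cinner (x::'a::chilbert) y = Complex (inner x y) (inner x (\<i> *\<^sub>C y))"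
proof -
  have "Re (cinner x (\<i> *\<^sub>C y)) = Im (cinner x y)"
    by (simp add: cinner_scaleC_right)
  then show ?thesis by (simp add: complex_eq_iff Re_cinner[symmetric])
qed

lemma tendsto_cinner[tendsto_intros]:
  fixes f g :: "'b \<Rightarrow> 'a::chilbert"
  assumes "(f \<longlongrightarrow> a) F" "(g \<longlongrightarrow> b) F"
  shows "((\<lambda>t. cinner (f t) (g t)) \<longlongrightarrow> cinner a b) F"
proof -
  have g2: "((\<lambda>t. \<i> *\<^sub>C g t) \<longlongrightarrow> \<i> *\<^sub>C b) F"
    using bounded_linear.tendsto[OF bounded_linear_scaleC assms(2)] .
  have "((\<lambda>t. Complex (inner (f t) (g t)) (inner (f t) (\<i> *\<^sub>C g t))) \<longlongrightarrow> Complex (inner a b) (inner a (\<i> *\<^sub>C b))) F"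
    by (intro tendsto_Complex tendsto_inner assms g2)
  then show ?thesis by (simp add: cinner_as_inner)
qed

lemma continuous_cinner[continuous_intros]:
  fixes f g :: "'b::t2_space \<Rightarrow> 'a::chilbert"
  shows "continuous F f \<Longrightarrow> continuous F g \<Longrightarrow> continuous F (\<lambda>t. cinner (f t) (g t))"
  unfolding continuous_def by (rule tendsto_cinner)



lemma orth_of_min:
  fixes a b :: "'a::real_inner"
  assumes "\<And>t. norm a \<le> norm (a - t *\<^sub>R b)"
  shows "inner a b = 0"
proof (cases "b = 0")
  case True then show ?thesis by simp
next
  case False
  define t where "t = inner a b / (norm b)\<^sup>2"
  have nb: "(norm b)\<^sup>2 > 0" using False by simp
  have "(norm (a - t *\<^sub>R b))\<^sup>2 = (norm a)\<^sup>2 - 2 * t * inner a b + t\<^sup>2 * (norm b)\<^sup>2"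
    by (simp only: power2_norm_eq_inner) (simp add: inner_diff_left inner_diff_right inner_commute[of b a] power2_eq_square algebra_simps)
  also have "\<dots> = (norm a)\<^sup>2 - (inner a b)\<^sup>2 / (norm b)\<^sup>2"
    using nb by (simp add: t_def power2_eq_square field_simps)
  finally have "(norm a)\<^sup>2 \<le> (norm a)\<^sup>2 - (inner a b)\<^sup>2 / (norm b)\<^sup>2"
    using assms[of t] by (metis norm_ge_zero power_mono)
  then have "(inner a b)\<^sup>2 / (norm b)\<^sup>2 \<le> 0" by simp
  then have "(inner a b)\<^sup>2 \<le> 0" using nb by (simp add: divide_le_0_iff)
  then show ?thesis by simp
qed



lemma minimizer_exists:
  fixes M :: "'a::chilbert set"
  assumes cl: "closed M" and ne: "M \<noteq> {}"
    and mid: "\<And>x y. x \<in> M \<Longrightarrow> y \<in> M \<Longrightarrow> (1/2) *\<^sub>R (x + y) \<in> M"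
  shows "\<exists>p\<in>M. \<forall>y\<in>M. norm (v - p) \<le> norm (v - y)"
proof -
  define d where "d = Inf ((\<lambda>y. norm (v - y)) ` M)"
  have bdd: "bdd_below ((\<lambda>y. norm (v - y)) ` M)" by (rule bdd_belowI[of _ 0]) auto
  have dle: "\<And>y. y \<in> M \<Longrightarrow> d \<le> norm (v - y)" unfolding d_def using bdd by (auto intro: cInf_lower)
  have d0: "d \<ge> 0" unfolding d_def using ne by (auto intro: cInf_greatest)
  have "\<forall>n. \<exists>y. y \<in> M \<and> norm (v - y) < d + 1 / real (Suc n)"
  proof
    fix n
    have "Inf ((\<lambda>y. norm (v - y)) ` M) < d + 1 / real (Suc n)" unfolding d_def[symmetric] by simp
    then have "\<exists>r\<in>(\<lambda>y. norm (v - y)) ` M. r < d + 1 / real (Suc n)"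
      by (rule cInf_lessD[rotated]) (use ne in simp)
    then show "\<exists>y. y \<in> M \<and> norm (v - y) < d + 1 / real (Suc n)" by blast
  qed
  then obtain y where yM: "\<And>n. y n \<in> M" and yd: "\<And>n. norm (v - y n) < d + 1 / real (Suc n)"
    by metis
  have sq: "(norm (v - y n))\<^sup>2 \<le> d\<^sup>2 + (2*d+1) * (1 / real (Suc n))" for n
  proof -
    define e where "e = 1 / real (Suc n)"
    have e0: "0 < e" "e \<le> 1" unfolding e_def by (auto simp: field_simps)
    have "(norm (v - y n))\<^sup>2 \<le> (d + e)\<^sup>2"
      using yd[of n] unfolding e_def[symmetric] by (intro power_mono) auto
    also have "\<dots> = d\<^sup>2 + (2*d + e) * e" by (simp add: power2_eq_square algebra_simps)
    also have "\<dots> \<le> d\<^sup>2 + (2*d+1) * e" using e0 d0 by (intro add_left_mono mult_right_mono) auto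
    finally show ?thesis unfolding e_def .
  qed
  have key: "(norm (y m - y n))\<^sup>2 \<le> 2 * (2*d+1) * (1 / real (Suc n) + 1 / real (Suc m))" for m n
  proof -
    define a where "a = v - y n"
    define b where "b = v - y m"
    have par: "(norm (a - b))\<^sup>2 + (norm (a + b))\<^sup>2 = 2 * (norm a)\<^sup>2 + 2 * (norm b)\<^sup>2"
      by (simp only: power2_norm_eq_inner) (simp add: inner_diff_left inner_diff_right inner_add_left inner_add_right inner_commute[of b a])
    have "a + b = 2 *\<^sub>R (v - (1/2) *\<^sub>R (y n + y m))" unfolding a_def b_def
      by (simp add: algebra_simps scaleR_add_right scaleR_2)
    then have "norm (a + b) = 2 * norm (v - (1/2) *\<^sub>R (y n + y m))" by simp
    moreover have "d \<le> norm (v - (1/2) *\<^sub>R (y n + y m))" using dle mid yM by blast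
    ultimately have "2 * d \<le> norm (a + b)" by simp
    then have "(2*d)\<^sup>2 \<le> (norm (a + b))\<^sup>2" using d0 by (intro power_mono) auto
    moreover have "a - b = y m - y n" unfolding a_def b_def by simp
    ultimately have "(norm (y m - y n))\<^sup>2 \<le> 2 * (norm a)\<^sup>2 + 2 * (norm b)\<^sup>2 - 4 * d\<^sup>2"
      using par by (simp add: power2_eq_square)
    also have "\<dots> \<le> 2 * (d\<^sup>2 + (2*d+1) * (1 / real (Suc n))) + 2 * (d\<^sup>2 + (2*d+1) * (1 / real (Suc m))) - 4 * d\<^sup>2"
      using sq[of n] sq[of m] unfolding a_def b_def by (intro diff_right_mono add_mono mult_left_mono) auto
    also have "\<dots> = 2 * (2*d+1) * (1 / real (Suc n) + 1 / real (Suc m))" by (simp add: algebra_simps)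
    finally show ?thesis .
  qed
  have "Cauchy y"
  proof (rule metric_CauchyI)
    fix \<epsilon> :: real assume "\<epsilon> > 0"
    obtain N :: nat where N: "4 * (2*d+1) / \<epsilon>\<^sup>2 < real N" using reals_Archimedean2 by blast
    have N1: "4 * (2*d+1) / real (Suc N) < \<epsilon>\<^sup>2"
      using N \<open>\<epsilon> > 0\<close> by (simp add: field_simps) (smt (verit) zero_less_power)
    show "\<exists>M. \<forall>m\<ge>M. \<forall>n\<ge>M. dist (y m) (y n) < \<epsilon>"
    proof (intro exI allI impI)
      fix m n assume mn: "m \<ge> N" "n \<ge> N"
      have i1: "1 / real (Suc n) \<le> 1 / real (Suc N)" "1 / real (Suc m) \<le> 1 / real (Suc N)"
        using mn by (auto simp: frac_le)
      have "2 * (2*d+1) * (1 / real (Suc n) + 1 / real (Suc m)) \<le> 2 * (2*d+1) * (1 / real (Suc N) + 1 / real (Suc N))"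
        using i1 d0 by (intro mult_left_mono add_mono) auto
      then have "(norm (y m - y n))\<^sup>2 \<le> 2 * (2*d+1) * (1 / real (Suc N) + 1 / real (Suc N))"
        using key[of m n] by linarith
      also have "\<dots> = 4 * (2*d+1) / real (Suc N)" by simp
      finally have "(norm (y m - y n))\<^sup>2 < \<epsilon>\<^sup>2" using N1 by linarith
      then have "norm (y m - y n) < \<epsilon>" using \<open>\<epsilon> > 0\<close> by (simp add: power_less_imp_less_base)
      then show "dist (y m) (y n) < \<epsilon>" by (simp add: dist_norm)
    qed
  qed
  then obtain p where yp: "y \<longlonglongrightarrow> p" using Cauchy_convergent_iff convergent_def by blast
  have pM: "p \<in> M" using cl yM yp closed_sequentially by blast
  have lim1: "(\<lambda>n. norm (v - y n)) \<longlonglongrightarrow> norm (v - p)" by (intro tendsto_intros yp)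
  have lim2: "(\<lambda>n. d + 1 / real (Suc n)) \<longlonglongrightarrow> d + 0"
    by (intro tendsto_intros LIMSEQ_Suc[OF lim_inverse_n'[unfolded inverse_eq_divide]])
  have "norm (v - p) \<le> d"
    using LIMSEQ_le[OF lim1 lim2] yd by (simp add: less_imp_le)
  then show ?thesis using pM dle by force
qed



definition csubsp :: "'a::chilbert set \<Rightarrow> bool" where
  "csubsp M \<longleftrightarrow> 0 \<in> M \<and> (\<forall>x\<in>M. \<forall>y\<in>M. x + y \<in> M) \<and> (\<forall>c. \<forall>x\<in>M. c *\<^sub>C x \<in> M)"

lemma csubsp_scaleR: "csubsp M \<Longrightarrow> x \<in> M \<Longrightarrow> r *\<^sub>R x \<in> M"
  unfolding csubsp_def by (metis scaleC_of_real)

lemma csubsp_diff: "csubsp M \<Longrightarrow> x \<in> M \<Longrightarrow> y \<in> M \<Longrightarrow> x - y \<in> M"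
  unfolding csubsp_def by (metis scaleC_of_real scale_minus_left scaleR_one diff_conv_add_uminus)

lemma proj_exists:
  fixes M :: "'a::chilbert set"
  assumes cl: "closed M" and sub: "csubsp M"
  shows "\<exists>p\<in>M. \<forall>z\<in>M. cinner (v - p) z = 0"
proof -
  have ne: "M \<noteq> {}" using sub unfolding csubsp_def by auto
  have mid: "\<And>x y. x \<in> M \<Longrightarrow> y \<in> M \<Longrightarrow> (1/2) *\<^sub>R (x + y) \<in> M"
    using sub by (simp add: csubsp_def csubsp_scaleR)
  obtain p where pM: "p \<in> M" and pmin: "\<forall>y\<in>M. norm (v - p) \<le> norm (v - y)"
    using minimizer_exists[OF cl ne mid] by blast
  have re: "inner (v - p) z = 0" if "z \<in> M" for z
  proof (rule orth_of_min)
    fix t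
    have "p + t *\<^sub>R z \<in> M" using sub pM that csubsp_scaleR unfolding csubsp_def by blast
    then have "norm (v - p) \<le> norm (v - (p + t *\<^sub>R z))" using pmin by blast
    then show "norm (v - p) \<le> norm (v - p - t *\<^sub>R z)" by (simp add: algebra_simps)
  qed
  have "cinner (v - p) z = 0" if "z \<in> M" for z
  proof -
    have "\<i> *\<^sub>C z \<in> M" using sub that unfolding csubsp_def by blast
    then have "inner (v - p) (\<i> *\<^sub>C z) = 0" using re by blast
    then show ?thesis using re[OF that] by (simp add: cinner_as_inner complex_eq_iff)
  qed
  then show ?thesis using pM by blast
qed

lemma proj_unique:
  fixes M :: "'a::chilbert set"
  assumes sub: "csubsp M" and "p \<in> M" "\<forall>z\<in>M. cinner (v - p) z = 0"
    and "q \<in> M" "\<forall>z\<in>M. cinner (v - q) z = 0"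
  shows "p = q"
proof -
  have "q - p \<in> M" using csubsp_diff assms by blast
  then have "cinner (v - p) (q - p) = 0" "cinner (v - q) (q - p) = 0" using assms by auto
  then have "cinner (q - p) (q - p) = 0"
  proof -
    have "q - p = (v - p) - (v - q)" by simp
    then have "cinner (q - p) (q - p) = cinner (v - p) (q - p) - cinner (v - q) (q - p)"
      by (metis cinner_diff_left)
    then show ?thesis using \<open>cinner (v - p) (q - p) = 0\<close> \<open>cinner (v - q) (q - p) = 0\<close> by simp
  qed
  then show ?thesis by (simp add: cinner_self_eq_0)
qed

lemma cproj_spec:
  fixes M :: "'a::chilbert set"
  assumes cl: "closed M" and sub: "csubsp M"
  shows "cproj M v \<in> M" "\<forall>z\<in>M. cinner (v - cproj M v) z = 0"
proof -
  obtain p where p: "p \<in> M \<and> (\<forall>z\<in>M. cinner (v - p) z = 0)" using proj_exists[OF cl sub] by blast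
  have "cproj M v = p" unfolding cproj_def
    by (rule the_equality, rule p) (use proj_unique[OF sub] p in blast)
  then show "cproj M v \<in> M" "\<forall>z\<in>M. cinner (v - cproj M v) z = 0" using p by auto
qed

lemma cproj_diff:
  fixes M :: "'a::chilbert set"
  assumes cl: "closed M" and sub: "csubsp M"
  shows "cproj M (a - b) = cproj M a - cproj M b"
proof -
  note A = cproj_spec[OF cl sub, of a] and B = cproj_spec[OF cl sub, of b]
  have "cproj M a - cproj M b \<in> M" using csubsp_diff[OF sub] A B by blast
  moreover have "\<forall>z\<in>M. cinner ((a - b) - (cproj M a - cproj M b)) z = 0"
  proof
    fix z assume "z \<in> M"
    have "(a - b) - (cproj M a - cproj M b) = (a - cproj M a) - (b - cproj M b)" by simp
    then show "cinner ((a - b) - (cproj M a - cproj M b)) z = 0"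
      using A B \<open>z \<in> M\<close> by (simp only: cinner_diff_left) simp
  qed
  ultimately show ?thesis using proj_unique[OF sub] cproj_spec[OF cl sub, of "a - b"] by blast
qed



lemma continuous_on_cinner[continuous_intros]:
  fixes f g :: "'b::topological_space \<Rightarrow> 'a::chilbert"
  shows "continuous_on s f \<Longrightarrow> continuous_on s g \<Longrightarrow> continuous_on s (\<lambda>t. cinner (f t) (g t))"
  unfolding continuous_on_def by (auto intro: tendsto_cinner)

lemma scaleC_m1: "(-1::complex) *\<^sub>C (x::'a::chilbert) = - x"
  using scaleC_of_real[of "-1" x] by simp

lemma lin_rel_add: "lin_rel T \<Longrightarrow> (x, f) \<in> T \<Longrightarrow> (y, g) \<in> T \<Longrightarrow> (x + y, f + g) \<in> T"
  unfolding lin_rel_def by blast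

lemma lin_rel_scaleC: "lin_rel T \<Longrightarrow> (x, f) \<in> T \<Longrightarrow> (c *\<^sub>C x, c *\<^sub>C f) \<in> T"
  unfolding lin_rel_def by blast

lemma lin_rel_zero: "lin_rel T \<Longrightarrow> (0, 0) \<in> T"
  unfolding lin_rel_def by blast

lemma lin_rel_minus: "lin_rel T \<Longrightarrow> (x, f) \<in> T \<Longrightarrow> (- x, - f) \<in> T"
  using lin_rel_scaleC[of T x f "-1"] by (simp add: scaleC_m1)

lemma lin_rel_diff: "lin_rel T \<Longrightarrow> (x, f) \<in> T \<Longrightarrow> (y, g) \<in> T \<Longrightarrow> (x - y, f - g) \<in> T"
  using lin_rel_add[of T x f "-y" "-g"] lin_rel_minus[of T y g] by simp

lemma radj_closed: "closed (radj (T::('a::chilbert \<times> 'a) set))"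
proof -
  have "radj T = (\<Inter>q\<in>T. {p. cinner (snd p) (fst q) = cinner (fst p) (snd q)})"
    unfolding radj_def by fastforce
  moreover have "closed {p::'a \<times> 'a. cinner (snd p) (fst q) = cinner (fst p) (snd q)}" for q
    by (intro closed_Collect_eq continuous_intros)
  ultimately show ?thesis by auto
qed

lemma herm_eq: "hermitian_rel T \<Longrightarrow> (x, f) \<in> T \<Longrightarrow> (y, g) \<in> T \<Longrightarrow> cinner g x = cinner y f"
  unfolding hermitian_rel_def radj_def by blast

lemma herm_orth0: "hermitian_rel T \<Longrightarrow> (0, p) \<in> T \<Longrightarrow> (x, f) \<in> T \<Longrightarrow> cinner p x = 0"
  using herm_eq[of T x f 0 p] by simp

lemma herm_real: "hermitian_rel T \<Longrightarrow> (x, f) \<in> T \<Longrightarrow> cnj (cinner f x) = cinner f x"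
  using herm_eq[of T x f x f] cinner_commute[of x f] by simp

lemma csubsp_rimg0: "lin_rel T \<Longrightarrow> csubsp (rimg T 0)"
  unfolding csubsp_def rimg_def using lin_rel_zero lin_rel_add[of T 0 _ 0] lin_rel_scaleC[of T 0]
  by fastforce

lemma closed_rimg0: "closed T \<Longrightarrow> closed (rimg (T::('a::real_normed_vector \<times> 'a) set) 0)"
proof -
  assume "closed T"
  have "rimg T 0 = (\<lambda>g. (0, g)) -` T" unfolding rimg_def by auto
  moreover have "closed ((\<lambda>g::'a. (0::'a, g)) -` T)"
    by (rule continuous_closed_vimage[OF \<open>closed T\<close>]) (intro continuous_intros)
  ultimately show ?thesis by simp
qed

lemma rsing_iff: "(x, f) \<in> rsing T \<longleftrightarrow> (x, f) \<in> T \<and> (\<forall>g. (0, g) \<in> T \<longrightarrow> cinner f g = 0)"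
  unfolding rsing_def rinf_def by auto

lemma rsing_unique:
  assumes "lin_rel T" "(x, f) \<in> rsing T" "(x, f') \<in> rsing T" shows "f = f'"
proof -
  have "(0, f - f') \<in> T" using lin_rel_diff[OF assms(1)] assms(2,3) rsing_iff by (metis diff_self)
  then have "cinner f (f - f') = 0" "cinner f' (f - f') = 0" using assms rsing_iff by blast+
  then have "cinner (f - f') (f - f') = 0" by (simp add: cinner_diff_left)
  then show ?thesis by (simp add: cinner_self_eq_0)
qed

lemma opart_spec:
  assumes lin: "lin_rel T" and cl: "closed T" and x: "x \<in> rdom T"
  shows "(x, opart T x) \<in> rsing T"
proof -
  obtain f where f: "(x, f) \<in> T" using x unfolding rdom_def by blast
  define M where "M = rimg T 0"
  have clM: "closed M" and subM: "csubsp M" unfolding M_def using closed_rimg0[OF cl] csubsp_rimg0[OF lin] by auto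
  note P = cproj_spec[OF clM subM, of f]
  have "(0, cproj M f) \<in> T" using P(1) unfolding M_def rimg_def by simp
  then have "(x - 0, f - cproj M f) \<in> T" by (rule lin_rel_diff[OF lin f])
  then have "(x, f - cproj M f) \<in> T" by simp
  moreover have "\<forall>g. (0, g) \<in> T \<longrightarrow> cinner (f - cproj M f) g = 0"
    using P(2) unfolding M_def rimg_def by simp
  ultimately have R: "(x, f - cproj M f) \<in> rsing T" by (simp add: rsing_iff)
  have "opart T x = f - cproj M f" unfolding opart_def
    by (rule the_equality, rule R) (use rsing_unique[OF lin _ R] in blast)
  then show ?thesis using R by simp
qed

lemma opart_in: "lin_rel T \<Longrightarrow> closed T \<Longrightarrow> x \<in> rdom T \<Longrightarrow> (x, opart T x) \<in> T"
  using opart_spec rsing_iff by blast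

lemma opart_orth: "lin_rel T \<Longrightarrow> closed T \<Longrightarrow> x \<in> rdom T \<Longrightarrow> (0, g) \<in> T \<Longrightarrow> cinner (opart T x) g = 0"
  using opart_spec rsing_iff by blast

lemma opart_diff:
  assumes lin: "lin_rel T" and cl: "closed T" and x: "x \<in> rdom T" and y: "y \<in> rdom T"
  shows "opart T (x - y) = opart T x - opart T y"
proof -
  have "(x - y, opart T x - opart T y) \<in> T" using lin_rel_diff[OF lin opart_in[OF lin cl x] opart_in[OF lin cl y]] .
  moreover have "\<forall>g. (0, g) \<in> T \<longrightarrow> cinner (opart T x - opart T y) g = 0"
    using opart_orth[OF lin cl x] opart_orth[OF lin cl y] by (simp add: cinner_diff_left)
  ultimately have R: "(x - y, opart T x - opart T y) \<in> rsing T" by (simp add: rsing_iff)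
  have "x - y \<in> rdom T" using R rsing_iff unfolding rdom_def by blast
  then show ?thesis using rsing_unique[OF lin opart_spec[OF lin cl] R] by blast
qed

lemma corth_closed: "closed (corth (M::'a::chilbert set))"
proof -
  have "corth M = (\<Inter>x\<in>M. {y. cinner x y = 0})" unfolding corth_def by auto
  moreover have "closed {y::'a. cinner x y = 0}" for x
    by (intro closed_Collect_eq continuous_intros)
  ultimately show ?thesis by auto
qed

lemma corth_csubsp: "csubsp (corth (M::'a::chilbert set))"
  unfolding csubsp_def corth_def by (simp add: cinner_add_right cinner_scaleC_right)



lemma real_of_cnj: "cnj z = z \<Longrightarrow> z = complex_of_real (Re z)"
  by (simp add: complex_eq_iff)

lemma herm_norm_id:
  assumes h: "hermitian_rel T" and xf: "(x, f) \<in> T" and c: "Re c = 0"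
  shows "(norm (f - c *\<^sub>C x))\<^sup>2 = (norm f)\<^sup>2 + (cmod c)\<^sup>2 * (norm x)\<^sup>2"
proof -
  have r: "cinner f x = complex_of_real (Re (cinner f x))" using herm_real[OF h xf] by (rule real_of_cnj)
  have "Re (cinner f (c *\<^sub>C x)) = 0"
    by (subst cinner_scaleC_right, subst r) (simp add: c)
  then show ?thesis by (simp add: norm_diff_sq norm_scaleC power_mult_distrib)
qed

lemma Cauchy_dom:
  fixes a :: "nat \<Rightarrow> 'a::metric_space" and b :: "nat \<Rightarrow> 'b::metric_space"
  assumes "Cauchy b" "k > 0" "\<And>m n. k * dist (a m) (a n) \<le> dist (b m) (b n)"
  shows "Cauchy a"
proof (rule metric_CauchyI)
  fix e :: real assume "e > 0"
  then have "k * e > 0" using assms(2) by simp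
  then obtain M where M: "\<forall>m\<ge>M. \<forall>n\<ge>M. dist (b m) (b n) < k * e" using metric_CauchyD[OF assms(1)] by blast
  show "\<exists>M. \<forall>m\<ge>M. \<forall>n\<ge>M. dist (a m) (a n) < e"
  proof (intro exI allI impI)
    fix m n assume "m \<ge> M" "n \<ge> M"
    then have "k * dist (a m) (a n) < k * e" using M assms(3)[of m n] by fastforce
    then show "dist (a m) (a n) < e" using assms(2) by simp
  qed
qed

locale sa_setup =
  fixes S :: "('a::chilbert \<times> 'a) set" and c :: complex
  assumes lin: "lin_rel S" and sa: "selfadjoint_rel S" and cre: "Re c = 0" and cim: "Im c \<noteq> 0"
begin

lemma herm: "hermitian_rel S" using sa unfolding selfadjoint_rel_def hermitian_rel_def by simp

lemma closedS: "closed S" using sa radj_closed unfolding selfadjoint_rel_def by metis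

lemma cpos: "cmod c > 0"
proof -
  have "c \<noteq> 0" using cim by auto
  then show ?thesis by simp
qed

definition Rg where "Rg = {f - c *\<^sub>C x | x f. (x, f) \<in> S}"

lemma diff_id: "(f - c *\<^sub>C x) - (g - c *\<^sub>C y) = (f - g) - c *\<^sub>C (x - y)"
  by (simp add: scaleC_diff_right algebra_simps)

lemma Rg_closed: "closed Rg"
proof (unfold closed_sequential_limits, intro allI impI, elim conjE)
  fix w l assume wR: "\<forall>n. w n \<in> Rg" and wl: "w \<longlonglongrightarrow> l"
  then have "\<forall>n. \<exists>x f. (x, f) \<in> S \<and> w n = f - c *\<^sub>C x" unfolding Rg_def by blast
  then obtain x f where xf: "\<And>n. (x n, f n) \<in> S" and w: "\<And>n. w n = f n - c *\<^sub>C x n" by metis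
  have est: "(norm (f m - f n))\<^sup>2 + (cmod c)\<^sup>2 * (norm (x m - x n))\<^sup>2 = (norm (w m - w n))\<^sup>2" for m n
  proof -
    have "w m - w n = (f m - f n) - c *\<^sub>C (x m - x n)" by (simp only: w diff_id)
    then show ?thesis using herm_norm_id[OF herm lin_rel_diff[OF lin xf xf] cre, of m n] by simp
  qed
  have cw: "Cauchy w" using wl by (rule LIMSEQ_imp_Cauchy)
  have "Cauchy f"
  proof (rule Cauchy_dom[OF cw, of 1])
    fix m n
    have "(norm (f m - f n))\<^sup>2 \<le> (norm (w m - w n))\<^sup>2" using est[of m n] zero_le_power2[of "cmod c"] zero_le_power2[of "norm (x m - x n)"] mult_nonneg_nonneg[of "(cmod c)\<^sup>2" "(norm (x m - x n))\<^sup>2"] by linarith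
    then have "norm (f m - f n) \<le> norm (w m - w n)" by (rule power2_le_imp_le) simp
    then show "1 * dist (f m) (f n) \<le> dist (w m) (w n)" by (simp add: dist_norm)
  qed simp
  then obtain g where fg: "f \<longlonglongrightarrow> g" using Cauchy_convergent_iff convergent_def by blast
  have "Cauchy x"
  proof (rule Cauchy_dom[OF cw cpos])
    fix m n
    have "(cmod c * norm (x m - x n))\<^sup>2 \<le> (norm (w m - w n))\<^sup>2" using est[of m n] zero_le_power2[of "norm (f m - f n)"] unfolding power_mult_distrib by linarith
    then have "cmod c * norm (x m - x n) \<le> norm (w m - w n)" by (rule power2_le_imp_le) simp
    then show "cmod c * dist (x m) (x n) \<le> dist (w m) (w n)" by (simp add: dist_norm)
  qed
  then obtain y where xy: "x \<longlonglongrightarrow> y" using Cauchy_convergent_iff convergent_def by blast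
  have PL: "(\<lambda>n. (x n, f n)) \<longlonglongrightarrow> (y, g)" using xy fg by (rule tendsto_Pair)
  have yg: "(y, g) \<in> S" by (rule closed_sequentially[OF closedS _ PL]) (simp add: xf)
  have "(\<lambda>n. f n - c *\<^sub>C x n) \<longlonglongrightarrow> g - c *\<^sub>C y"
    by (intro tendsto_diff fg bounded_linear.tendsto[OF bounded_linear_scaleC] xy)
  moreover have "w = (\<lambda>n. f n - c *\<^sub>C x n)" using w by (intro ext) simp
  ultimately have "l = g - c *\<^sub>C y" using wl LIMSEQ_unique by auto
  then show "l \<in> Rg" using yg unfolding Rg_def by blast
qed

lemma Rg_csubsp: "csubsp Rg"
  unfolding csubsp_def
proof (intro conjI ballI allI)
  have "(0::'a) = 0 - c *\<^sub>C 0" by simp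
  then show "0 \<in> Rg" unfolding Rg_def using lin_rel_zero[OF lin] by blast
  fix u w assume "u \<in> Rg" "w \<in> Rg"
  then obtain x f y g where "(x, f) \<in> S" "(y, g) \<in> S" "u = f - c *\<^sub>C x" "w = g - c *\<^sub>C y"
    unfolding Rg_def by blast
  moreover have "(f - c *\<^sub>C x) + (g - c *\<^sub>C y) = (f + g) - c *\<^sub>C (x + y)" by (simp add: scaleC_add_right)
  ultimately show "u + w \<in> Rg" unfolding Rg_def using lin_rel_add[OF lin] by fastforce
next
  fix d u assume "u \<in> Rg"
  then obtain x f where "(x, f) \<in> S" "u = f - c *\<^sub>C x" unfolding Rg_def by blast
  moreover have "d *\<^sub>C (f - c *\<^sub>C x) = d *\<^sub>C f - c *\<^sub>C (d *\<^sub>C x)"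
    by (simp add: scaleC_diff_right scaleC_scaleC mult.commute)
  ultimately show "d *\<^sub>C u \<in> Rg" unfolding Rg_def using lin_rel_scaleC[OF lin] by fastforce
qed

lemma surj: "\<exists>x f. (x, f) \<in> S \<and> f - c *\<^sub>C x = v"
proof -
  obtain p where pR: "p \<in> Rg" and po: "\<forall>m\<in>Rg. cinner (v - p) m = 0"
    using proj_exists[OF Rg_closed Rg_csubsp] by blast
  define z where "z = v - p"
  have "(z, cnj c *\<^sub>C z) \<in> radj S" unfolding radj_def
  proof (clarify)
    fix x f assume xf: "(x, f) \<in> S"
    then have "cinner z (f - c *\<^sub>C x) = 0" using po unfolding z_def Rg_def by blast
    then show "cinner (cnj c *\<^sub>C z) x = cinner z f"
      by (simp add: cinner_diff_right cinner_scaleC_right cinner_scaleC_left)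
  qed
  then have zS: "(z, cnj c *\<^sub>C z) \<in> S" using sa unfolding selfadjoint_rel_def by simp
  have "cinner (cnj c *\<^sub>C z) z = cinner z (cnj c *\<^sub>C z)" using herm_eq[OF herm zS zS] .
  then have "(cnj c - c) * cinner z z = 0"
    by (simp add: cinner_scaleC_left cinner_scaleC_right algebra_simps)
  moreover have "cnj c - c \<noteq> 0" using cim by (simp add: complex_eq_iff)
  ultimately have "z = 0" by (simp add: cinner_self_eq_0)
  then have "v = p" unfolding z_def by simp
  then show ?thesis using pR unfolding Rg_def by blast
qed

lemma estimate:
  assumes xf: "(x, f) \<in> S" and v: "f - c *\<^sub>C x = v"
  shows "norm (opart S x) \<le> norm v" "cmod c * norm x \<le> norm v"
proof -
  have xd: "x \<in> rdom S" using xf unfolding rdom_def by blast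
  define s where "s = opart S x"
  have sS: "(x, s) \<in> S" unfolding s_def using opart_in[OF lin closedS xd] .
  define p where "p = f - s"
  have pS: "(0, p) \<in> S" unfolding p_def using lin_rel_diff[OF lin xf sS] by simp
  have vv: "v = (s - c *\<^sub>C x) + p" unfolding p_def v[symmetric] by simp
  have o1: "cinner s p = 0" unfolding s_def using opart_orth[OF lin closedS xd pS] .
  have o2: "cinner x p = 0" using herm_orth0[OF herm pS xf] cinner_commute[of x p] by simp
  have "cinner (s - c *\<^sub>C x) p = 0" using o1 o2 by (simp add: cinner_diff_left cinner_scaleC_left)
  then have "(norm v)\<^sup>2 = (norm (s - c *\<^sub>C x))\<^sup>2 + (norm p)\<^sup>2" unfolding vv by (simp add: norm_add_sq)
  also have "(norm (s - c *\<^sub>C x))\<^sup>2 = (norm s)\<^sup>2 + (cmod c)\<^sup>2 * (norm x)\<^sup>2"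
    using herm_norm_id[OF herm sS cre] .
  finally have E: "(norm v)\<^sup>2 = (norm s)\<^sup>2 + (cmod c * norm x)\<^sup>2 + (norm p)\<^sup>2" by (simp add: power_mult_distrib)
  have "(norm s)\<^sup>2 \<le> (norm v)\<^sup>2" using E by (smt (verit) zero_le_power2)
  then have "norm s \<le> norm v" by (rule power2_le_imp_le) simp
  then show "norm (opart S x) \<le> norm v" unfolding s_def .
  have "(cmod c * norm x)\<^sup>2 \<le> (norm v)\<^sup>2" using E by (smt (verit) zero_le_power2)
  then show "cmod c * norm x \<le> norm v" by (rule power2_le_imp_le) simp
qed

end



lemma rsum_iff: "(x, h) \<in> rsum S A \<longleftrightarrow> (\<exists>f g. (x, f) \<in> S \<and> (x, g) \<in> A \<and> h = f + g)"
  unfolding rsum_def by blast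

lemma lin_rel_rsum:
  assumes lS: "lin_rel S" and lA: "lin_rel A" shows "lin_rel (rsum S A)"
  unfolding lin_rel_def
proof (intro conjI allI impI)
  show "(0, 0) \<in> rsum S A" unfolding rsum_iff using lin_rel_zero[OF lS] lin_rel_zero[OF lA] by auto
next
  fix x f y g
  assume "(x, f) \<in> rsum S A \<and> (y, g) \<in> rsum S A"
  then obtain f1 f2 g1 g2 where a: "(x, f1) \<in> S" "(x, f2) \<in> A" "f = f1 + f2" "(y, g1) \<in> S" "(y, g2) \<in> A" "g = g1 + g2"
    unfolding rsum_iff by blast
  have "(x + y, f1 + g1) \<in> S" "(x + y, f2 + g2) \<in> A" using lin_rel_add[OF lS] lin_rel_add[OF lA] a by auto
  moreover have "f + g = (f1 + g1) + (f2 + g2)" using a by simp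
  ultimately show "(x + y, f + g) \<in> rsum S A" unfolding rsum_iff by blast
next
  fix c x f
  assume "(x, f) \<in> rsum S A"
  then obtain f1 f2 where a: "(x, f1) \<in> S" "(x, f2) \<in> A" "f = f1 + f2" unfolding rsum_iff by blast
  have "(c *\<^sub>C x, c *\<^sub>C f1) \<in> S" "(c *\<^sub>C x, c *\<^sub>C f2) \<in> A" using lin_rel_scaleC[OF lS] lin_rel_scaleC[OF lA] a by auto
  moreover have "c *\<^sub>C f = c *\<^sub>C f1 + c *\<^sub>C f2" using a by (simp add: scaleC_add_right)
  ultimately show "(c *\<^sub>C x, c *\<^sub>C f) \<in> rsum S A" unfolding rsum_iff by blast
qed

lemma surjT:
  fixes S A :: "('a::chilbert \<times> 'a) set"
  assumes linS: "lin_rel S" and sa: "selfadjoint_rel S"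
    and linA: "lin_rel A" and clA: "closed A" and dom: "rdom S \<subseteq> rdom A"
    and cre: "Re c = 0" and cim: "Im c \<noteq> 0"
    and a0: "0 \<le> a" and b0: "0 \<le> b" and k1: "a + b / cmod c < 1"
    and bnd: "\<forall>x\<in>rdom S. norm (cproj (corth (rimg S 0)) (opart A x)) \<le> a * norm (opart S x) + b * norm x"
  shows "\<exists>x h. (x, h) \<in> rsum S A \<and> h - c *\<^sub>C x = w"
proof -
  interpret sa_setup S c using linS sa cre cim by unfold_locales
  define M where "M = corth (rimg S 0)"
  have clM: "closed M" and subM: "csubsp M" unfolding M_def using corth_closed corth_csubsp by auto
  define R where "R v = (SOME x. \<exists>f. (x, f) \<in> S \<and> f - c *\<^sub>C x = v)" for v
  have R: "\<exists>f. (R v, f) \<in> S \<and> f - c *\<^sub>C R v = v" for v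
    unfolding R_def by (rule someI_ex) (use surj in blast)
  have RdS: "R v \<in> rdom S" for v using R[of v] unfolding rdom_def by blast
  define F where "F v = w - cproj M (opart A (R v))" for v
  define k where "k = a + b / cmod c"
  have k0: "0 \<le> k" unfolding k_def using a0 b0 by simp
  have lip: "dist (F v) (F v') \<le> k * dist v v'" for v v'
  proof -
    obtain f f' where ff: "(R v, f) \<in> S" "f - c *\<^sub>C R v = v" "(R v', f') \<in> S" "f' - c *\<^sub>C R v' = v'"
      using R[of v] R[of v'] by blast
    define x where "x = R v - R v'"
    have xS: "(x, f - f') \<in> S" unfolding x_def using lin_rel_diff[OF linS ff(1) ff(3)] .
    have xv: "(f - f') - c *\<^sub>C x = v - v'" unfolding x_def using ff(2,4) by (simp add: scaleC_diff_right algebra_simps)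
    have xd: "x \<in> rdom S" using xS unfolding rdom_def by blast
    note est = estimate[OF xS xv]
    have "F v - F v' = - (cproj M (opart A (R v)) - cproj M (opart A (R v')))" unfolding F_def by simp
    also have "cproj M (opart A (R v)) - cproj M (opart A (R v')) = cproj M (opart A x)"
    proof -
      have "R v \<in> rdom A" "R v' \<in> rdom A" using dom RdS by auto
      then show ?thesis unfolding x_def by (simp add: opart_diff[OF linA clA] cproj_diff[OF clM subM])
    qed
    finally have "dist (F v) (F v') = norm (cproj M (opart A x))" by (simp add: dist_norm)
    also have "\<dots> \<le> a * norm (opart S x) + b * norm x" using bnd xd unfolding M_def by blast
    also have "\<dots> \<le> a * norm (v - v') + b * (norm (v - v') / cmod c)"
    proof (intro add_mono mult_left_mono)
      show "norm x \<le> norm (v - v') / cmod c" using est(2) cpos by (simp add: field_simps)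
    qed (use est(1) a0 b0 in auto)
    also have "\<dots> = k * dist v v'" unfolding k_def by (simp add: dist_norm algebra_simps)
    finally show ?thesis .
  qed
  obtain v where Fv: "F v = v" using banach_fix_type[OF k0 k1[folded k_def]] lip by blast
  obtain f where f: "(R v, f) \<in> S" "f - c *\<^sub>C R v = v" using R[of v] by blast
  define x where "x = R v"
  define y where "y = opart A x"
  have xy: "(x, y) \<in> A" unfolding y_def x_def using opart_in[OF linA clA] dom RdS by blast
  define n where "n = cproj M y - y"
  have "(0, n) \<in> radj S" unfolding radj_def
  proof (clarify)
    fix u h assume uh: "(u, h) \<in> S"
    have "u \<in> M" unfolding M_def corth_def rimg_def using herm_orth0[OF herm _ uh] by blast
    then have "cinner (y - cproj M y) u = 0" using cproj_spec(2)[OF clM subM] by blast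
    then show "cinner n u = cinner 0 h" unfolding n_def
      by (metis cinner_minus_left minus_diff_eq minus_zero cinner_zero_left)
  qed
  then have n: "(0, n) \<in> S" using sa unfolding selfadjoint_rel_def by simp
  have "(x + 0, f + n) \<in> S" unfolding x_def using lin_rel_add[OF linS f(1) n] .
  then have "(x, (f + n) + y) \<in> rsum S A" using xy unfolding rsum_def by auto
  moreover have "((f + n) + y) - c *\<^sub>C x = w"
  proof -
    have "((f + n) + y) - c *\<^sub>C x = (f - c *\<^sub>C x) + n + y" by simp
    also have "\<dots> = v + n + y" unfolding x_def using f(2) by simp
    also have "v = w - cproj M y" using Fv unfolding F_def y_def x_def by simp
    finally show ?thesis unfolding n_def by simp
  qed
  ultimately show ?thesis by blast
qed

lemma sa_from_surj:
  fixes T :: "('a::chilbert \<times> 'a) set"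
  assumes lin: "lin_rel T" and h: "hermitian_rel T"
    and s1: "\<And>w. \<exists>x f. (x, f) \<in> T \<and> f - c *\<^sub>C x = w"
    and s2: "\<And>w. \<exists>x f. (x, f) \<in> T \<and> f - cnj c *\<^sub>C x = w"
  shows "selfadjoint_rel T"
  unfolding selfadjoint_rel_def
proof
  show "T \<subseteq> radj T" using h unfolding hermitian_rel_def .
  show "radj T \<subseteq> T"
  proof
    fix p assume "p \<in> radj T"
    then obtain y g where p: "p = (y, g)" and yg: "(y, g) \<in> radj T" by (cases p) auto
    obtain x f where xf: "(x, f) \<in> T" and e: "f - c *\<^sub>C x = g - c *\<^sub>C y" using s1 by blast
    define z where "z = y - x"
    have gf: "g - f = c *\<^sub>C z" unfolding z_def using e by (simp add: scaleC_diff_right algebra_simps)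
    have zr: "\<forall>u h. (u, h) \<in> T \<longrightarrow> cinner (c *\<^sub>C z) u = cinner z h"
    proof (intro allI impI)
      fix u h assume uh: "(u, h) \<in> T"
      have "cinner g u = cinner y h" using yg uh unfolding radj_def by blast
      moreover have "cinner f u = cinner x h" using h xf uh unfolding hermitian_rel_def radj_def by blast
      ultimately have "cinner (g - f) u = cinner (y - x) h" by (simp add: cinner_diff_left)
      then show "cinner (c *\<^sub>C z) u = cinner z h" using gf unfolding z_def by simp
    qed
    obtain u h where uh: "(u, h) \<in> T" and e2: "h - cnj c *\<^sub>C u = z" using s2 by blast
    have "cinner z z = cinner z h - c * cinner z u"
      unfolding e2[symmetric] by (simp add: cinner_diff_right cinner_scaleC_right)
    also have "cinner z h = c * cinner z u" using zr uh by (simp add: cinner_scaleC_left)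
    finally have "z = 0" by (simp add: cinner_self_eq_0)
    then have "y = x" "g = f" using gf unfolding z_def by auto
    then show "p \<in> T" using p xf by simp
  qed
qed



theorem theorem4p2:
  fixes S A :: "('a::chilbert \<times> 'a) set"
  assumes "lin_rel S" and "selfadjoint_rel S"
    and "lin_rel A" and "closed A" and "hermitian_rel A"
    and "closed (rsum S A)" and "hermitian_rel (rsum S A)"
    and "rdom S \<subseteq> rdom A"
    and "rel_bounded (\<lambda>x. cproj (corth (rimg S 0)) (opart A x)) (rdom A) (opart S) (rdom S)"
    and "rel_bound (\<lambda>x. cproj (corth (rimg S 0)) (opart A x)) (opart S) (rdom S) < 1"
  shows "lin_rel (rsum S A) \<and> selfadjoint_rel (rsum S A)"
proof -
  note as = assms
  define U where "U x = cproj (corth (rimg S 0)) (opart A x)" for x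
  define \<Omega> where "\<Omega> = {a. a \<ge> 0 \<and> (\<exists>b\<ge>0. \<forall>x\<in>rdom S. norm (U x) \<le> a * norm (opart S x) + b * norm x)}"
  obtain c0 where c0: "c0 \<ge> 0" "\<forall>x\<in>rdom S. norm (U x) \<le> c0 * (norm x + norm (opart S x))"
    using as(9) unfolding rel_bounded_def U_def by blast
  have "c0 \<in> \<Omega>" unfolding \<Omega>_def using c0 by (auto simp: algebra_simps intro!: exI[of _ c0])
  then have ne: "\<Omega> \<noteq> {}" by blast
  have "Inf \<Omega> < 1" using as(10) unfolding rel_bound_def \<Omega>_def U_def .
  then obtain a where "a \<in> \<Omega>" "a < 1" using cInf_lessD[OF ne] by blast
  then obtain b where a0: "0 \<le> a" and a1: "a < 1" and b0: "0 \<le> b"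
    and bnd: "\<forall>x\<in>rdom S. norm (U x) \<le> a * norm (opart S x) + b * norm x"
    unfolding \<Omega>_def by blast
  define \<mu> where "\<mu> = 2 * (b + 1) / (1 - a)"
  have mu0: "\<mu> > 0" unfolding \<mu>_def using a1 b0 by simp
  have "b / \<mu> = (1 - a) * (b / (2 * (b + 1)))" unfolding \<mu>_def using a1 b0 by (simp add: field_simps)
  moreover have "b / (2 * (b + 1)) < 1" using b0 by (simp add: field_simps)
  ultimately have "b / \<mu> < 1 - a" using a1 by (metis mult.right_neutral mult_strict_left_mono diff_gt_0_iff_gt)
  then have k1: "a + b / \<mu> < 1" by simp
  define c where "c = Complex 0 \<mu>"
  have cm: "cmod c = \<mu>" "cmod (cnj c) = \<mu>" unfolding c_def using mu0 by (auto simp: cmod_def)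
  have bnd': "\<forall>x\<in>rdom S. norm (cproj (corth (rimg S 0)) (opart A x)) \<le> a * norm (opart S x) + b * norm x"
    using bnd unfolding U_def .
  have s1: "\<exists>x f. (x, f) \<in> rsum S A \<and> f - c *\<^sub>C x = w" for w
    by (rule surjT[OF as(1,2,3,4,8) _ _ a0 b0 _ bnd']) (use mu0 k1 cm in \<open>auto simp: c_def\<close>)
  have s2: "\<exists>x f. (x, f) \<in> rsum S A \<and> f - cnj c *\<^sub>C x = w" for w
    by (rule surjT[OF as(1,2,3,4,8) _ _ a0 b0 _ bnd']) (use mu0 k1 cm in \<open>auto simp: c_def\<close>)
  have lin: "lin_rel (rsum S A)" using lin_rel_rsum[OF as(1,3)] .
  show ?thesis using lin sa_from_surj[OF lin as(7) s1 s2] by blast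
qed


end
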